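(* Let $a,b,c$ be positive numbers with $a<b<c$ and $b-a<c_0<a$, where $c_0=c-\lfloor c/b\rfloor b$. Let $H=[c_0+a-b,c_0)+a\mathbb Z$ and $\tilde H=[c-c_0,c-c_0+b-a)+a\mathbb Z$. Then: (i) $\mathcal S_{a,b,c}$ satisfies $R_{a,b,c}\mathcal S_{a,b,c}\subset\mathcal S_{a,b,c}$, $\tilde R_{a,b,c}\mathcal S_{a,b,c}\subset\mathcal S_{a,b,c}$ and $\mathcal S_{a,b,c}\cap(H\cup\tilde H)=\emptyset$; and every set $E\subset\mathbb R$ with $R_{a,b,c}E\subset E$, $\tilde R_{a,b,c}E\subset E$ and $E\cap(H\cup\tilde H)=\emptyset$ satisfies $E\subset\mathcal S_{a,b,c}$. (ii) $\mathbb R\setminus\mathcal S_{a,b,c}$ satisfies $R_{a,b,c}(\mathbb R\setminus\mathcal S_{a,b,c})\subset\mathbb R\setminus\mathcal S_{a,b,c}$, $\tilde R_{a,b,c}(\mathbb R\setminus\mathcal S_{a,b,c})\subset\mathbb R\setminus\mathcal S_{a,b,c}$ and contains $H\cup\tilde H$; and every set $F$ with $R_{a,b,c}F\subset F$, $\tilde R_{a,b,c}F\subset F$ and $H\cup\tilde H\subset F$ contains $\mathbb R\setminus\mathcal S_{a,b,c}$.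
   Context: For $a,b,c>0$ and $t\in\mathbb R$, $\mathbf M_{a,b,c}(t)=(\chi_{[0,c)}(t-\mu+\lambda))_{\mu\in a\mathbb Z,\lambda\in b\mathbb Z}$ is the infinite matrix with rows indexed by $a\mathbb Z$ and columns by $b\mathbb Z$, acting by $(\mathbf M_{a,b,c}(t)\mathbf x)(\mu)=\sum_{\lambda\in b\mathbb Z}\chi_{[0,c)}(t-\mu+\lambda)\mathbf x(\lambda)$. $\mathcal B_b$ is the set of vectors $(\mathbf x(\lambda))_{\lambda\in b\mathbb Z}$ with entries in $\{0,1\}$, and $\mathcal B_b^0=\{\mathbf x\in\mathcal B_b:\mathbf x(0)=1\}$. $\mathbf 1$ denotes the vector indexed by $a\mathbb Z$ with all entries $1$. $\mathcal S_{a,b,c}=\{t:\mathbf M_{a,b,c}(t)\mathbf x=\mathbf 1\text{ for some }\mathbf x\in\mathcal B_b^0\}$. With $c_0=c-\lfloor c/b\rfloor b$ and $b-a<c_0<a$, the piecewise linear maps $R_{a,b,c},\tilde R_{a,b,c}:\mathbb R\to\mathbb R$ are: $R_{a,b,c}(t)=t+\lfloor c/b\rfloor b+b$ if $t\in[0,c_0+a-b)+a\mathbb Z$, $R_{a,b,c}(t)=t$ if $t\in[c_0+a-b,c_0)+a\mathbb Z$, $R_{a,b,c}(t)=t+\lfloor c/b\rfloor b$ if $t\in[c_0,a)+a\mathbb Z$; $\tilde R_{a,b,c}(t)=t-\lfloor c/b\rfloor b$ if $t\in[c-a,c-c_0)+a\mathbb Z$, $\tilde R_{a,b,c}(t)=t$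 if $t\in[c-c_0,c-c_0+b-a)+a\mathbb Z$, $\tilde R_{a,b,c}(t)=t-\lfloor c/b\rfloor b-b$ if $t\in[c-c_0+b-a,c)+a\mathbb Z$. Here $A+a\mathbb Z=\{x+ak:x\in A,k\in\mathbb Z\}$. *)

theory Defs
  imports Complex_Main
begin

definition chi :: "real \<Rightarrow> real \<Rightarrow> real" where
  "chi c s = (if 0 \<le> s \<and> s < c then 1 else 0)"

(* (M_{a,b,c}(t) x)(a*m), where x is indexed by k \<in> \<int> standing for \<lambda> = b*k.
   Only finitely many terms are nonzero (b > 0), so the sum is over the finite support of chi. *)
definition Mapp :: "real \<Rightarrow> real \<Rightarrow> real \<Rightarrow> real \<Rightarrow> (int \<Rightarrow> real) \<Rightarrow> int \<Rightarrow> real" where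
  "Mapp a b c t x m =
     (\<Sum>k \<in> {k::int. 0 \<le> t - a * of_int m + b * of_int k \<and> t - a * of_int m + b * of_int k < c}.
        chi c (t - a * of_int m + b * of_int k) * x k)"

definition Bb0 :: "(int \<Rightarrow> real) set" where
  "Bb0 = {x. (\<forall>k. x k \<in> {0, 1}) \<and> x 0 = 1}"

definition Sabc :: "real \<Rightarrow> real \<Rightarrow> real \<Rightarrow> real set" where
  "Sabc a b c = {t. \<exists>x \<in> Bb0. \<forall>m::int. Mapp a b c t x m = 1}"

definition inmod :: "real \<Rightarrow> real \<Rightarrow> real \<Rightarrow> real \<Rightarrow> bool" where
  "inmod a l u t = (\<exists>k::int. l \<le> t - a * of_int k \<and> t - a * of_int k < u)"

definition c0 :: "real \<Rightarrow> real \<Rightarrow> real" where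
  "c0 b c = c - of_int \<lfloor>c / b\<rfloor> * b"

definition R :: "real \<Rightarrow> real \<Rightarrow> real \<Rightarrow> real \<Rightarrow> real" where
  "R a b c t =
     (if inmod a 0 (c0 b c + a - b) t then t + of_int \<lfloor>c / b\<rfloor> * b + b
      else if inmod a (c0 b c + a - b) (c0 b c) t then t
      else if inmod a (c0 b c) a t then t + of_int \<lfloor>c / b\<rfloor> * b
      else undefined)"

definition Rt :: "real \<Rightarrow> real \<Rightarrow> real \<Rightarrow> real \<Rightarrow> real" where
  "Rt a b c t =
     (if inmod a (c - a) (c - c0 b c) t then t - of_int \<lfloor>c / b\<rfloor> * b
      else if inmod a (c - c0 b c) (c - c0 b c + b - a) t then t
      else if inmod a (c - c0 b c + b - a) c t then t - of_int \<lfloor>c / b\<rfloor> * b - b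
      else undefined)"

definition H :: "real \<Rightarrow> real \<Rightarrow> real \<Rightarrow> real set" where
  "H a b c = {t. inmod a (c0 b c + a - b) (c0 b c) t}"

definition Ht :: "real \<Rightarrow> real \<Rightarrow> real \<Rightarrow> real set" where
  "Ht a b c = {t. inmod a (c - c0 b c) (c - c0 b c + b - a) t}"

end

theory Submission
  imports Defs
begin

definition md :: "real \<Rightarrow> real \<Rightarrow> real" where
  "md a t = t - a * of_int \<lfloor>t / a\<rfloor>"

lemma md_bounds: assumes "0 < a" shows "0 \<le> md a t" "md a t < a"
proof -
  have "of_int \<lfloor>t/a\<rfloor> \<le> t/a" "t/a < of_int \<lfloor>t/a\<rfloor> + 1" by linarith+
  hence h1: "of_int \<lfloor>t/a\<rfloor> * a \<le> t"
    using assms by (simp_all add: le_divide_eq)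
  have "t/a * a < (of_int \<lfloor>t/a\<rfloor> + 1) * a"
    using assms \<open>t/a < of_int \<lfloor>t/a\<rfloor> + 1\<close> mult_strict_right_mono by blast
  hence "t < (of_int \<lfloor>t/a\<rfloor> + 1) * a" using assms by simp
  hence "of_int \<lfloor>t/a\<rfloor> * a \<le> t" "t < (of_int \<lfloor>t/a\<rfloor> + 1) * a" using h1 by auto
  thus "0 \<le> md a t" "md a t < a" unfolding md_def by (simp_all add: algebra_simps)
qed

lemma md_eq: assumes "0 < a" "0 \<le> s" "s < a" "t = a * of_int j + s" shows "md a t = s"
proof -
  have "\<lfloor>t/a\<rfloor> = j" unfolding floor_eq_iff using assms
    by (simp add: le_divide_eq divide_less_eq algebra_simps)
  thus ?thesis using assms unfolding md_def by simp
qed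

lemma md_split: "t = a * of_int \<lfloor>t / a\<rfloor> + md a t" unfolding md_def by simp

lemma md_add: assumes "0 < a" "0 \<le> md a t + e" "md a t + e < a" shows "md a (t + e) = md a t + e"
  by (rule md_eq[where j="\<lfloor>t/a\<rfloor>"]) (use assms md_split[of t a] in auto)

lemma inmod_md: assumes "0 < a" "0 \<le> l" "u \<le> a"
  shows "inmod a l u t \<longleftrightarrow> l \<le> md a t \<and> md a t < u"
proof
  assume "inmod a l u t"
  then obtain k where k: "l \<le> t - a * of_int k" "t - a * of_int k < u" unfolding inmod_def by auto
  have "md a t = t - a * of_int k"
    by (rule md_eq[where j=k]) (use assms k in auto)
  thus "l \<le> md a t \<and> md a t < u" using k by simp
next
  assume "l \<le> md a t \<and> md a t < u"
  thus "inmod a l u t" unfolding inmod_def md_def by auto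
qed

lemma inmod_c: "inmod a l u t \<longleftrightarrow> inmod a (l - c + a) (u - c + a) (t - c)"
proof
  assume "inmod a l u t"
  then obtain k where k: "l \<le> t - a * of_int k" "t - a * of_int k < u" unfolding inmod_def by auto
  show "inmod a (l - c + a) (u - c + a) (t - c)" unfolding inmod_def
    by (rule exI[where x="k - 1"]) (use k in \<open>simp add: algebra_simps\<close>)
next
  assume "inmod a (l - c + a) (u - c + a) (t - c)"
  then obtain k where k: "l - c + a \<le> t - c - a * of_int k" "t - c - a * of_int k < u - c + a" unfolding inmod_def by auto
  show "inmod a l u t" unfolding inmod_def
    by (rule exI[where x="k + 1"]) (use k in \<open>simp add: algebra_simps\<close>)
qed

lemma lt_from: assumes "0 < (b::real)" "b * of_int n < of_int k * b" shows "n < k"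
proof -
  have "b * of_int n < b * of_int k" using assms by (simp add: mult.commute)
  thus ?thesis using assms by (simp add: mult_less_cancel_left_pos)
qed

lemma gt_from: assumes "0 < (b::real)" "of_int k * b < b * of_int n" shows "k < n"
proof -
  have "b * of_int k < b * of_int n" using assms by (simp add: mult.commute)
  thus ?thesis using assms by (simp add: mult_less_cancel_left_pos)
qed

lemma int_gt_from_mult: assumes "0 < (b::real)" "b * of_int k < b * of_int n" shows "k < n"
  using assms by (simp add: mult_less_cancel_left_pos)

definition good :: "real \<Rightarrow> real \<Rightarrow> real \<Rightarrow> real \<Rightarrow> bool" where
  "good a b c t = (\<forall>n. (R a b c ^^ n) t \<notin> H a b c \<and> (Rt a b c ^^ n) t \<notin> Ht a b c)"

context
  fixes a b c :: real
  assumes A: "0 < a" "a < b" "b < c" "b - a < c0 b c" "c0 b c < a"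
begin

abbreviation "dd \<equiv> c0 b c"
abbreviation "LL \<equiv> \<lfloor>c / b\<rfloor>"

lemma c_eq: "c = of_int LL * b + dd" unfolding c0_def by simp

lemma L_ge1: "LL \<ge> 1"
proof -
  have "1 \<le> c / b" using A by (simp add: le_divide_eq)
  thus ?thesis by (simp add: le_floor_iff)
qed

lemma Lb_ge: "of_int LL * b \<ge> b"
  using L_ge1 A by simp

lemma R_form: "R a b c t = (if md a t < dd + a - b then t + of_int LL * b + b
     else if md a t < dd then t else t + of_int LL * b)"
proof -
  have m: "0 \<le> md a t" "md a t < a" using md_bounds A by auto
  have 1: "inmod a 0 (dd + a - b) t \<longleftrightarrow> md a t < dd + a - b"
    using inmod_md[of a 0 "dd + a - b" t] A m by auto
  have 2: "inmod a (dd + a - b) dd t \<longleftrightarrow> dd + a - b \<le> md a t \<and> md a t < dd"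
    using inmod_md[of a "dd + a - b" dd t] A m by auto
  have 3: "inmod a dd a t \<longleftrightarrow> dd \<le> md a t"
    using inmod_md[of a dd a t] A m by auto
  show ?thesis unfolding R_def using 1 2 3 by auto
qed

lemma H_iff: "t \<in> H a b c \<longleftrightarrow> dd + a - b \<le> md a t \<and> md a t < dd"
  unfolding H_def using inmod_md[of a "dd + a - b" dd t] A by auto

lemma Rt_form: "Rt a b c t = (if md a (t - c) < a - dd then t - of_int LL * b
     else if md a (t - c) < b - dd then t else t - of_int LL * b - b)"
proof -
  have m: "0 \<le> md a (t - c)" "md a (t - c) < a" using md_bounds A by auto
  have 1: "inmod a (c - a) (c - dd) t \<longleftrightarrow> md a (t - c) < a - dd"
    using inmod_c[of a "c - a" "c - dd" t c] inmod_md[of a 0 "a - dd" "t - c"] A m by auto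
  have 2: "inmod a (c - dd) (c - dd + b - a) t \<longleftrightarrow> a - dd \<le> md a (t - c) \<and> md a (t - c) < b - dd"
    using inmod_c[of a "c - dd" "c - dd + b - a" t c] inmod_md[of a "a - dd" "b - dd" "t - c"] A m by auto
  have 3: "inmod a (c - dd + b - a) c t \<longleftrightarrow> b - dd \<le> md a (t - c)"
    using inmod_c[of a "c - dd + b - a" c t c] inmod_md[of a "b - dd" a "t - c"] A m by auto
  show ?thesis unfolding Rt_def using 1 2 3 by auto
qed

lemma Ht_iff: "t \<in> Ht a b c \<longleftrightarrow> a - dd \<le> md a (t - c) \<and> md a (t - c) < b - dd"
  unfolding Ht_def using inmod_c[of a "c - dd" "c - dd + b - a" t c] inmod_md[of a "a - dd" "b - dd" "t - c"] A by auto

lemma RtR: assumes "t \<notin> H a b c" shows "Rt a b c (R a b c t) = t \<and> R a b c t \<notin> Ht a b c"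
proof -
  have m: "0 \<le> md a t" "md a t < a" using md_bounds A by auto
  show ?thesis
  proof (cases "md a t < dd + a - b")
    case True
    hence Rt: "R a b c t = t + of_int LL * b + b" using R_form by simp
    have "R a b c t - c = t + (b - dd)" using Rt c_eq by simp
    moreover have "md a (t + (b - dd)) = md a t + (b - dd)"
      by (rule md_add) (use A m True in auto)
    ultimately have e: "md a (R a b c t - c) = md a t + b - dd" by simp
    show ?thesis unfolding Rt_form[of "R a b c t"] Ht_iff e using True m A Rt by auto
  next
    case False
    hence ge: "md a t \<ge> dd" using assms H_iff by auto
    hence Rt: "R a b c t = t + of_int LL * b" using R_form A by simp
    have "R a b c t - c = t + (- dd)" using Rt c_eq by simp
    moreover have "md a (t + (- dd)) = md a t + (- dd)"
      by (rule md_add) (use A m ge in auto)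
    ultimately have e: "md a (R a b c t - c) = md a t - dd" by simp
    show ?thesis unfolding Rt_form[of "R a b c t"] Ht_iff e using ge m A Rt by auto
  qed
qed

lemma RRt: assumes "t \<notin> Ht a b c" shows "R a b c (Rt a b c t) = t \<and> Rt a b c t \<notin> H a b c"
proof -
  have m: "0 \<le> md a (t - c)" "md a (t - c) < a" using md_bounds A by auto
  show ?thesis
  proof (cases "md a (t - c) < a - dd")
    case True
    hence Rt: "Rt a b c t = t - of_int LL * b" using Rt_form by simp
    have "Rt a b c t = (t - c) + dd" using Rt c_eq by simp
    moreover have "md a ((t - c) + dd) = md a (t - c) + dd"
      by (rule md_add) (use A m True in auto)
    ultimately have e: "md a (Rt a b c t) = md a (t - c) + dd" by simp
    show ?thesis unfolding R_form[of "Rt a b c t"] H_iff e using True m A Rt by auto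
  next
    case False
    hence ge: "md a (t - c) \<ge> b - dd" using assms Ht_iff by auto
    hence Rt: "Rt a b c t = t - of_int LL * b - b" using Rt_form A by simp
    have "Rt a b c t = (t - c) + (dd - b)" using Rt c_eq by simp
    moreover have "md a ((t - c) + (dd - b)) = md a (t - c) + (dd - b)"
      by (rule md_add) (use A m ge in auto)
    ultimately have e: "md a (Rt a b c t) = md a (t - c) + dd - b" by simp
    show ?thesis unfolding R_form[of "Rt a b c t"] H_iff e using ge m A Rt by auto
  qed
qed

lemma good_R: assumes "good a b c t" shows "good a b c (R a b c t)"
  unfolding good_def
proof
  fix n
  have g: "\<And>n. (R a b c ^^ n) t \<notin> H a b c" "\<And>n. (Rt a b c ^^ n) t \<notin> Ht a b c"
    using assms unfolding good_def by auto
  have "(R a b c ^^ n) (R a b c t) = (R a b c ^^ Suc n) t" by (simp add: funpow_swap1)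
  hence 1: "(R a b c ^^ n) (R a b c t) \<notin> H a b c" using g(1) by metis
  have 2: "(Rt a b c ^^ n) (R a b c t) \<notin> Ht a b c"
  proof (cases n)
    case 0 thus ?thesis using RtR g(1)[of 0] by simp
  next
    case (Suc m)
    have "(Rt a b c ^^ n) (R a b c t) = (Rt a b c ^^ m) (Rt a b c (R a b c t))"
      using Suc by (simp add: funpow_swap1)
    also have "\<dots> = (Rt a b c ^^ m) t" using RtR g(1)[of 0] by simp
    finally show ?thesis using g(2) by simp
  qed
  show "(R a b c ^^ n) (R a b c t) \<notin> H a b c \<and> (Rt a b c ^^ n) (R a b c t) \<notin> Ht a b c"
    using 1 2 by simp
qed

lemma good_Rt: assumes "good a b c t" shows "good a b c (Rt a b c t)"
  unfolding good_def
proof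
  fix n
  have g: "\<And>n. (R a b c ^^ n) t \<notin> H a b c" "\<And>n. (Rt a b c ^^ n) t \<notin> Ht a b c"
    using assms unfolding good_def by auto
  have "(Rt a b c ^^ n) (Rt a b c t) = (Rt a b c ^^ Suc n) t" by (simp add: funpow_swap1)
  hence 1: "(Rt a b c ^^ n) (Rt a b c t) \<notin> Ht a b c" using g(2) by metis
  have 2: "(R a b c ^^ n) (Rt a b c t) \<notin> H a b c"
  proof (cases n)
    case 0 thus ?thesis using RRt g(2)[of 0] by simp
  next
    case (Suc m)
    have "(R a b c ^^ n) (Rt a b c t) = (R a b c ^^ m) (R a b c (Rt a b c t))"
      using Suc by (simp add: funpow_swap1)
    also have "\<dots> = (R a b c ^^ m) t" using RRt g(2)[of 0] by simp
    finally show ?thesis using g(1) by simp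
  qed
  show "(R a b c ^^ n) (Rt a b c t) \<notin> H a b c \<and> (Rt a b c ^^ n) (Rt a b c t) \<notin> Ht a b c"
    using 1 2 by simp
qed

lemma R_on_H: "t \<in> H a b c \<Longrightarrow> R a b c t = t"
  using R_form H_iff by auto

lemma Rt_on_Ht: "t \<in> Ht a b c \<Longrightarrow> Rt a b c t = t"
  using Rt_form Ht_iff by auto

lemma good_R_back: assumes "good a b c (R a b c t)" shows "good a b c t"
proof (cases "t \<in> H a b c")
  case True thus ?thesis using assms R_on_H by simp
next
  case False
  have g: "\<And>n. (R a b c ^^ n) (R a b c t) \<notin> H a b c" "\<And>n. (Rt a b c ^^ n) (R a b c t) \<notin> Ht a b c"
    using assms unfolding good_def by auto
  show ?thesis unfolding good_def
  proof
    fix n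
    have 1: "(R a b c ^^ n) t \<notin> H a b c"
    proof (cases n)
      case 0 thus ?thesis using False by simp
    next
      case (Suc m) thus ?thesis using g(1)[of m] by (simp add: funpow_swap1)
    qed
    have "(Rt a b c ^^ n) t = (Rt a b c ^^ n) (Rt a b c (R a b c t))" using RtR False by simp
    also have "\<dots> = (Rt a b c ^^ Suc n) (R a b c t)" by (simp add: funpow_swap1)
    finally have 2: "(Rt a b c ^^ n) t \<notin> Ht a b c" using g(2) by metis
    show "(R a b c ^^ n) t \<notin> H a b c \<and> (Rt a b c ^^ n) t \<notin> Ht a b c" using 1 2 by simp
  qed
qed

lemma good_Rt_back: assumes "good a b c (Rt a b c t)" shows "good a b c t"
proof (cases "t \<in> Ht a b c")
  case True thus ?thesis using assms Rt_on_Ht by simp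
next
  case False
  have g: "\<And>n. (R a b c ^^ n) (Rt a b c t) \<notin> H a b c" "\<And>n. (Rt a b c ^^ n) (Rt a b c t) \<notin> Ht a b c"
    using assms unfolding good_def by auto
  show ?thesis unfolding good_def
  proof
    fix n
    have 1: "(Rt a b c ^^ n) t \<notin> Ht a b c"
    proof (cases n)
      case 0 thus ?thesis using False by simp
    next
      case (Suc m) thus ?thesis using g(2)[of m] by (simp add: funpow_swap1)
    qed
    have "(R a b c ^^ n) t = (R a b c ^^ n) (R a b c (Rt a b c t))" using RRt False by simp
    also have "\<dots> = (R a b c ^^ Suc n) (Rt a b c t)" by (simp add: funpow_swap1)
    finally have 2: "(R a b c ^^ n) t \<notin> H a b c" using g(1) by metis
    show "(R a b c ^^ n) t \<notin> H a b c \<and> (Rt a b c ^^ n) t \<notin> Ht a b c" using 1 2 by simp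
  qed
qed

lemma min_F: assumes "R a b c ` F \<subseteq> F" "Rt a b c ` F \<subseteq> F" "H a b c \<union> Ht a b c \<subseteq> F"
  and "\<not> good a b c t" shows "t \<in> F"
proof -
  have A1: "\<And>t. (R a b c ^^ n) t \<in> H a b c \<Longrightarrow> t \<in> F" for n
  proof (induction n)
    case 0 thus ?case using assms(3) by auto
  next
    case (Suc n)
    fix t assume "(R a b c ^^ Suc n) t \<in> H a b c"
    hence "(R a b c ^^ n) (R a b c t) \<in> H a b c" by (simp add: funpow_swap1)
    hence F: "R a b c t \<in> F" using Suc.IH by blast
    show "t \<in> F"
    proof (cases "t \<in> H a b c")
      case True thus ?thesis using assms(3) by auto
    next
      case False
      hence "t = Rt a b c (R a b c t)" using RtR by simp
      thus ?thesis using F assms(2) by (metis image_subset_iff)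
    qed
  qed
  have A2: "\<And>t. (Rt a b c ^^ n) t \<in> Ht a b c \<Longrightarrow> t \<in> F" for n
  proof (induction n)
    case 0 thus ?case using assms(3) by auto
  next
    case (Suc n)
    fix t assume "(Rt a b c ^^ Suc n) t \<in> Ht a b c"
    hence "(Rt a b c ^^ n) (Rt a b c t) \<in> Ht a b c" by (simp add: funpow_swap1)
    hence F: "Rt a b c t \<in> F" using Suc.IH by blast
    show "t \<in> F"
    proof (cases "t \<in> Ht a b c")
      case True thus ?thesis using assms(3) by auto
    next
      case False
      hence "t = R a b c (Rt a b c t)" using RRt by simp
      thus ?thesis using F assms(1) by (metis image_subset_iff)
    qed
  qed
  from assms(4) obtain n where "(R a b c ^^ n) t \<in> H a b c \<or> (Rt a b c ^^ n) t \<in> Ht a b c"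
    unfolding good_def by auto
  thus ?thesis using A1 A2 by blast
qed

lemma E_good: assumes "R a b c ` E \<subseteq> E" "Rt a b c ` E \<subseteq> E" "E \<inter> (H a b c \<union> Ht a b c) = {}"
  and "t \<in> E" shows "good a b c t"
proof -
  have "(R a b c ^^ n) t \<in> E \<and> (Rt a b c ^^ n) t \<in> E" for n
    by (induction n) (use assms in auto)
  thus ?thesis unfolding good_def using assms(3) by blast
qed

lemma finK: "finite {k::int. 0 \<le> t - a * of_int m + b * of_int k \<and> t - a * of_int m + b * of_int k < c}"
proof -
  have "{k::int. 0 \<le> t - a * of_int m + b * of_int k \<and> t - a * of_int m + b * of_int k < c}
     \<subseteq> {\<lceil>(a * of_int m - t) / b\<rceil> .. \<lfloor>(a * of_int m - t + c) / b\<rfloor>}"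
  proof
    fix k assume k: "k \<in> {k::int. 0 \<le> t - a * of_int m + b * of_int k \<and> t - a * of_int m + b * of_int k < c}"
    have b: "0 < b" using A by simp
    have "(a * of_int m - t) / b \<le> of_int k" using k b by (simp add: divide_le_eq mult.commute)
    moreover have "of_int k \<le> (a * of_int m - t + c) / b" using k b by (simp add: le_divide_eq mult.commute)
    ultimately show "k \<in> {\<lceil>(a * of_int m - t) / b\<rceil> .. \<lfloor>(a * of_int m - t + c) / b\<rfloor>}"
      by (simp add: ceiling_le_iff le_floor_iff)
  qed
  thus ?thesis using finite_subset by blast
qed

lemma Mapp_sum: "Mapp a b c t x m =
   (\<Sum>k\<in>{k::int. 0 \<le> t - a * of_int m + b * of_int k \<and> t - a * of_int m + b * of_int k < c}. x k)"
  unfolding Mapp_def by (rule sum.cong) (auto simp: chi_def)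

lemma S_good: assumes "t \<in> Sabc a b c" shows "good a b c t"
proof -
  obtain x where x01: "\<And>k. x k \<in> {0,1}" and x0: "x 0 = 1" and xm: "\<And>m. Mapp a b c t x m = 1"
    using assms unfolding Sabc_def Bb0_def by auto
  define K where "K m = {k::int. 0 \<le> t - a * of_int m + b * of_int k \<and> t - a * of_int m + b * of_int k < c}" for m
  have Ks: "(\<Sum>k\<in>K m. x k) = 1" for m using xm[of m] Mapp_sum unfolding K_def by simp
  have Kf: "finite (K m)" for m using finK unfolding K_def by simp
  have xnn: "0 \<le> x k" for k using x01[of k] by auto
  define P where "P = {t + b * of_int k | k. x k = 1}"
  have ex: "\<exists>p\<in>P. a * of_int m \<le> p \<and> p < a * of_int m + c" for m
  proof (rule ccontr)
    assume nex: "\<not> ?thesis"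
    have "\<forall>k\<in>K m. x k = 0"
    proof
      fix k assume k: "k \<in> K m"
      show "x k = 0"
      proof (rule ccontr)
        assume "x k \<noteq> 0"
        hence "x k = 1" using x01[of k] by auto
        hence "t + b * of_int k \<in> P" unfolding P_def by auto
        thus False using k nex unfolding K_def by auto
      qed
    qed
    hence "(\<Sum>k\<in>K m. x k) = 0" by simp
    thus False using Ks[of m] by simp
  qed
  have un: "p = q" if hyp: "p \<in> P" "q \<in> P" "a * of_int m \<le> p" "p < a * of_int m + c"
      "a * of_int m \<le> q" "q < a * of_int m + c" for p q m
  proof -
    obtain k1 where k1: "p = t + b * of_int k1" "x k1 = 1" using hyp P_def by auto
    obtain k2 where k2: "q = t + b * of_int k2" "x k2 = 1" using hyp P_def by auto
    have i: "k1 \<in> K m" "k2 \<in> K m" unfolding K_def using hyp k1 k2 by auto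
    show ?thesis
    proof (rule ccontr)
      assume "p \<noteq> q"
      hence ne: "k1 \<noteq> k2" using k1 k2 by auto
      have "(\<Sum>k\<in>{k1,k2}. x k) \<le> (\<Sum>k\<in>K m. x k)"
        using xnn by (intro sum_mono2) (use Kf i in auto)
      thus False using ne k1 k2 Ks[of m] by simp
    qed
  qed
  have b: "0 < b" "a < c" using A by auto
  have fwd: "p \<notin> H a b c \<and> R a b c p \<in> P" if pP: "p \<in> P" for p
  proof -
    obtain kp where kp: "p = t + b * of_int kp" "x kp = 1" using pP P_def by auto
    define j where "j = \<lfloor>p / a\<rfloor>"
    define r where "r = md a p"
    have pj: "p = a * of_int j + r" unfolding j_def r_def by (rule md_split)
    have r: "0 \<le> r" "r < a" unfolding r_def using md_bounds A by auto
    obtain q where q: "q \<in> P" "a * of_int (j+1) \<le> q" "q < a * of_int (j+1) + c" using ex by blast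
    have qge: "q \<ge> a * of_int j + c"
    proof (rule ccontr)
      assume "\<not> ?thesis"
      hence "p = q" using un[OF pP q(1), of j] q pj r b by (auto simp: algebra_simps)
      thus False using q pj r by (simp add: algebra_simps)
    qed
    obtain kq where kq: "q = t + b * of_int kq" "x kq = 1" using q P_def by auto
    define n where "n = kq - kp - LL"
    have bn: "b * of_int n = q - p - of_int LL * b" unfolding n_def using kp kq by (simp add: algebra_simps)
    have lo: "b * of_int n \<ge> dd - r" using bn qge pj c_eq by (simp add: algebra_simps)
    have hi: "b * of_int n < a + dd - r" using bn q(3) pj c_eq by (simp add: algebra_simps)
    have "- b < b * of_int n" using lo r A by linarith
    hence n1: "-1 < n" using gt_from[of b "-1" n] b by simp
    have "b * of_int n < 2 * b" using hi r A by linarith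
    hence n2: "n < 2" using lt_from[of b n 2] b by simp
    have "n = 0 \<or> n = 1" using n1 n2 by auto
    thus ?thesis
    proof
      assume n: "n = 0"
      hence rr: "r \<ge> dd" using lo by simp
      have "R a b c p = p + of_int LL * b" using R_form[of p] rr A unfolding r_def by auto
      moreover have "q = p + of_int LL * b" using bn n by simp
      moreover have "p \<notin> H a b c" using H_iff rr unfolding r_def by auto
      ultimately show ?thesis using q by simp
    next
      assume n: "n = 1"
      hence rr: "r < dd + a - b" using hi by simp
      have "R a b c p = p + of_int LL * b + b" using R_form[of p] rr A unfolding r_def by auto
      moreover have "q = p + of_int LL * b + b" using bn n by simp
      moreover have "p \<notin> H a b c" using H_iff rr unfolding r_def by auto
      ultimately show ?thesis using q by simp
    qed
  qed
  have bwd: "p \<notin> Ht a b c \<and> Rt a b c p \<in> P" if pP: "p \<in> P" for p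
  proof -
    obtain kp where kp: "p = t + b * of_int kp" "x kp = 1" using pP P_def by auto
    define j where "j = \<lfloor>(p - c) / a\<rfloor>"
    define r where "r = md a (p - c)"
    have pj: "p - c = a * of_int j + r" unfolding j_def r_def by (rule md_split)
    have r: "0 \<le> r" "r < a" unfolding r_def using md_bounds A by auto
    obtain q where q: "q \<in> P" "a * of_int j \<le> q" "q < a * of_int j + c" using ex by blast
    have qlt: "q < a * of_int j + a"
    proof (rule ccontr)
      assume "\<not> ?thesis"
      hence "p = q" using un[OF pP q(1), of "j+1"] q pj r b by (auto simp: algebra_simps)
      thus False using q pj r by (simp add: algebra_simps)
    qed
    obtain kq where kq: "q = t + b * of_int kq" "x kq = 1" using q P_def by auto
    define n where "n = kq - kp + LL"
    have bn: "b * of_int n = q - p + of_int LL * b" unfolding n_def using kp kq by (simp add: algebra_simps)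
    have lo: "b * of_int n \<ge> - r - dd" using bn q(2) pj c_eq by (simp add: algebra_simps)
    have hi: "b * of_int n < a - r - dd" using bn qlt pj c_eq by (simp add: algebra_simps)
    have "- 2 * b < b * of_int n" using lo r A by linarith
    hence n1: "-2 < n" using gt_from[of b "-2" n] b by simp
    have "b * of_int n < b" using hi r A by linarith
    hence n2: "n < 1" using lt_from[of b n 1] b by simp
    have "n = 0 \<or> n = -1" using n1 n2 by auto
    thus ?thesis
    proof
      assume n: "n = 0"
      hence rr: "r < a - dd" using hi by simp
      have "Rt a b c p = p - of_int LL * b" using Rt_form[of p] rr A unfolding r_def by auto
      moreover have "q = p - of_int LL * b" using bn n by simp
      moreover have "p \<notin> Ht a b c" using Ht_iff rr unfolding r_def by auto
      ultimately show ?thesis using q by simp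
    next
      assume n: "n = -1"
      hence rr: "r \<ge> b - dd" using lo by simp
      have "Rt a b c p = p - of_int LL * b - b" using Rt_form[of p] rr A unfolding r_def by auto
      moreover have "q = p - of_int LL * b - b" using bn n by simp
      moreover have "p \<notin> Ht a b c" using Ht_iff rr unfolding r_def by auto
      ultimately show ?thesis using q by simp
    qed
  qed
  have tP: "t \<in> P" unfolding P_def using x0 by force
  have "(R a b c ^^ n) t \<in> P \<and> (Rt a b c ^^ n) t \<in> P" for n
    by (induction n) (use tP fwd bwd in auto)
  thus ?thesis unfolding good_def using fwd bwd by blast
qed

lemma R_step: "\<exists>k. R a b c s = s + b * of_int k"
proof -
  consider "R a b c s = s + of_int LL * b + b" | "R a b c s = s" | "R a b c s = s + of_int LL * b"
    using R_form[of s] by metis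
  thus ?thesis
  proof cases
    case 1 thus ?thesis by (intro exI[where x="LL + 1"]) (simp add: algebra_simps)
  next
    case 2 thus ?thesis by (intro exI[where x="0"]) simp
  next
    case 3 thus ?thesis by (intro exI[where x="LL"]) (simp add: algebra_simps)
  qed
qed

lemma Rt_step: "\<exists>k. Rt a b c s = s + b * of_int k"
proof -
  consider "Rt a b c s = s - of_int LL * b" | "Rt a b c s = s" | "Rt a b c s = s - of_int LL * b - b"
    using Rt_form[of s] by metis
  thus ?thesis
  proof cases
    case 1 thus ?thesis by (intro exI[where x="- LL"]) (simp add: algebra_simps)
  next
    case 2 thus ?thesis by (intro exI[where x="0"]) simp
  next
    case 3 thus ?thesis by (intro exI[where x="- LL - 1"]) (simp add: algebra_simps)
  qed
qed

lemma funpow_step: assumes "\<And>s. \<exists>k. f s = s + b * of_int k"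
  shows "\<exists>k. (f ^^ n) s = s + b * of_int (k::int)"
proof (induction n)
  case 0 show ?case by (intro exI[where x=0]) simp
next
  case (Suc n)
  then obtain k where k: "(f ^^ n) s = s + b * of_int k" by blast
  obtain k' where k': "f ((f ^^ n) s) = (f ^^ n) s + b * of_int k'" using assms by blast
  have "(f ^^ Suc n) s = (f ^^ n) s + b * of_int k'" using k' by simp
  also have "\<dots> = s + b * of_int (k + k')" using k by (simp add: algebra_simps)
  finally show ?case by blast
qed

lemma R_incr: assumes "s \<notin> H a b c" shows "R a b c s \<ge> s + b"
  using R_form[of s] H_iff[of s] assms Lb_ge A by (auto split: if_splits)

lemma amlt: "a * of_int j < a * of_int m \<Longrightarrow> j < m"
  using A by (simp add: mult_less_cancel_left_pos)

lemma gap: assumes "s \<notin> H a b c"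
  shows "\<not> (R a b c s - c < a * of_int m \<and> a * of_int m \<le> s)"
    "\<not> (s < a * of_int m \<and> a * of_int m \<le> R a b c s - c)"
proof -
  define j where "j = \<lfloor>s / a\<rfloor>"
  define r where "r = md a s"
  have sj: "s = a * of_int j + r" unfolding j_def r_def by (rule md_split)
  have r: "0 \<le> r" "r < a" unfolding r_def using md_bounds A by auto
  have "(R a b c s - c < a * of_int m \<and> a * of_int m \<le> s) \<or> (s < a * of_int m \<and> a * of_int m \<le> R a b c s - c) \<Longrightarrow> False"
  proof (cases "r < dd + a - b")
    case True
    hence Rs: "R a b c s - c = s + b - dd" using R_form[of s] c_eq unfolding r_def by simp
    assume h: "(R a b c s - c < a * of_int m \<and> a * of_int m \<le> s) \<or> (s < a * of_int m \<and> a * of_int m \<le> R a b c s - c)"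
    hence h2: "s < a * of_int m \<and> a * of_int m \<le> s + b - dd" using Rs A by auto
    have "j < m" using h2 sj r by (intro amlt) linarith
    moreover have "m < j + 1" using h2 sj r True by (intro amlt) (simp add: algebra_simps)
    ultimately show False by simp
  next
    case False
    have ge: "r \<ge> dd" using assms H_iff False unfolding r_def by auto
    hence Rs: "R a b c s - c = s - dd" using R_form[of s] c_eq A unfolding r_def by simp
    assume h: "(R a b c s - c < a * of_int m \<and> a * of_int m \<le> s) \<or> (s < a * of_int m \<and> a * of_int m \<le> R a b c s - c)"
    hence h2: "s - dd < a * of_int m \<and> a * of_int m \<le> s" using Rs A by auto
    have "j < m" using h2 sj r ge by (intro amlt) linarith
    moreover have "m < j + 1" using h2 sj r by (intro amlt) (simp add: algebra_simps)
    ultimately show False by simp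
  qed
  thus "\<not> (R a b c s - c < a * of_int m \<and> a * of_int m \<le> s)"
    "\<not> (s < a * of_int m \<and> a * of_int m \<le> R a b c s - c)" by blast+
qed

lemma good_iter: "good a b c t \<Longrightarrow> good a b c ((R a b c ^^ n) t) \<and> good a b c ((Rt a b c ^^ n) t)"
  by (induction n) (auto intro: good_R good_Rt)

lemma good_notin: "good a b c t \<Longrightarrow> t \<notin> H a b c \<and> t \<notin> Ht a b c"
  unfolding good_def by (metis funpow_0)

lemma good_S: assumes g: "good a b c t" shows "t \<in> Sabc a b c"
proof -
  define p where "p i = (if 0 \<le> i then (R a b c ^^ nat i) t else (Rt a b c ^^ nat (-i)) t)" for i :: int
  have pg: "good a b c (p i)" for i unfolding p_def using good_iter[OF g] by auto
  have pn: "p i \<notin> H a b c" "p i \<notin> Ht a b c" for i using good_notin[OF pg[of i]] by auto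
  have p0: "p 0 = t" unfolding p_def by simp
  have pR: "p (i + 1) = R a b c (p i)" for i
  proof (cases "0 \<le> i")
    case True
    hence "nat (i + 1) = Suc (nat i)" by simp
    thus ?thesis unfolding p_def using True by simp
  next
    case False
    define n' where "n' = nat (-(i+1))"
    have e1: "nat (-i) = Suc n'" unfolding n'_def using False by simp
    have e2: "p (i + 1) = (Rt a b c ^^ n') t" unfolding p_def n'_def using False by auto
    have "p i = (Rt a b c ^^ nat (-i)) t" unfolding p_def using False by simp
    also have "\<dots> = Rt a b c ((Rt a b c ^^ n') t)" using e1 by simp
    finally have "p i = Rt a b c (p (i + 1))" using e2 by simp
    thus ?thesis using RRt pn(2)[of "i+1"] by simp
  qed
  have pk: "\<exists>k. p i = t + b * of_int k" for i
    unfolding p_def using funpow_step[OF R_step] funpow_step[OF Rt_step] by auto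
  have pinc: "p (i + 1) \<ge> p i + b" for i using pR R_incr pn by simp
  have pmono0: "p i < p (i + 1 + int n)" for i n
  proof (induction n)
    case 0 show ?case using pinc[of i] A by simp
  next
    case (Suc n)
    have "p (i + 1 + int n) < p (i + 1 + int n + 1)" using pinc[of "i + 1 + int n"] A by simp
    thus ?case using Suc by (simp add: add.assoc)
  qed
  have pmono: "p i < p j" if "i < j" for i j
  proof -
    have "j = i + 1 + int (nat (j - i - 1))" using that by simp
    thus ?thesis using pmono0 by metis
  qed
  have pmono': "p i \<le> p j" if "i \<le> j" for i j
    using pmono[of i j] that by (cases "i = j") auto
  have gapP: "\<not> (p (i+1) - c < a * of_int m \<and> a * of_int m \<le> p i)"
      "\<not> (p i < a * of_int m \<and> a * of_int m \<le> p (i+1) - c)" for i m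
    using gap[OF pn(1)[of i], of m] pR[of i] by auto
  have Wall: "\<exists>i. a * of_int m \<le> p i \<and> p i < a * of_int m + c" for m
  proof (induction m rule: int_induct[where k="\<lfloor>t / a\<rfloor>"])
    case base
    have "t = a * of_int \<lfloor>t / a\<rfloor> + md a t" by (rule md_split)
    moreover have "0 \<le> md a t" "md a t < a" using md_bounds A by auto
    ultimately show ?case using p0 A by (intro exI[where x=0]) auto
  next
    case (step1 m)
    then obtain i where i: "a * of_int m \<le> p i" "p i < a * of_int m + c" by blast
    show ?case
    proof (cases "a * of_int (m + 1) \<le> p i")
      case True thus ?thesis using i A by (intro exI[where x=i]) (simp add: algebra_simps)
    next
      case False
      have "a * of_int (m+1) \<le> p (i + 1)" using pinc[of i] i A by (simp add: algebra_simps)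
      moreover have "p (i + 1) < a * of_int (m+1) + c" using gapP(2)[of i "m+1"] False by auto
      ultimately show ?thesis by blast
    qed
  next
    case (step2 m)
    then obtain i where i: "a * of_int m \<le> p i" "p i < a * of_int m + c" by blast
    show ?case
    proof (cases "p i < a * of_int (m - 1) + c")
      case True thus ?thesis using i A by (intro exI[where x=i]) (simp add: algebra_simps)
    next
      case False
      have e: "p (i - 1 + 1) = p i" by simp
      have "a * of_int (m - 1) \<le> p (i - 1)" using gapP(2)[of "i - 1" "m - 1"] e False by auto
      moreover have "p (i - 1) < a * of_int (m - 1) + c" using pinc[of "i - 1"] e i A by (simp add: algebra_simps)
      ultimately show ?thesis by blast
    qed
  qed
  have Wuniq0: "False" if "i1 < i2" "a * of_int m \<le> p i1" "p i1 < a * of_int m + c"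
      "a * of_int m \<le> p i2" "p i2 < a * of_int m + c" for i1 i2 m
  proof -
    have e: "p (i2 - 1 + 1) = p i2" by simp
    have "p i1 \<le> p (i2 - 1)" using pmono' that(1) by simp
    thus False using gapP(1)[of "i2 - 1" m] e that by auto
  qed
  have Wuniq: "i1 = i2" if "a * of_int m \<le> p i1" "p i1 < a * of_int m + c"
      "a * of_int m \<le> p i2" "p i2 < a * of_int m + c" for i1 i2 m
    using Wuniq0[of i1 i2 m] Wuniq0[of i2 i1 m] that by (cases i1 i2 rule: linorder_cases) auto
  define x where "x k = (if \<exists>i. t + b * of_int k = p i then 1 else 0 :: real)" for k :: int
  have xB: "x \<in> Bb0" unfolding Bb0_def x_def using p0 by auto
  have "Mapp a b c t x m = 1" for m
  proof -
    define K where "K = {k::int. 0 \<le> t - a * of_int m + b * of_int k \<and> t - a * of_int m + b * of_int k < c}"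
    have Kf: "finite K" unfolding K_def by (rule finK)
    obtain i where i: "a * of_int m \<le> p i" "p i < a * of_int m + c" using Wall by blast
    obtain k0 where k0: "p i = t + b * of_int k0" using pk by blast
    have k0K: "k0 \<in> K" unfolding K_def using i k0 by auto
    have x0: "x k0 = 1" unfolding x_def using k0[symmetric] by auto
    have rest: "x k = 0" if "k \<in> K - {k0}" for k
    proof (rule ccontr)
      assume "x k \<noteq> 0"
      then obtain i' where i': "t + b * of_int k = p i'" unfolding x_def by (auto split: if_splits)
      have "i' = i" using Wuniq[of m i' i] i i' that unfolding K_def by auto
      hence "b * of_int k = b * of_int k0" using i' k0 by simp
      hence "k = k0" using A by simp
      thus False using that by simp
    qed
    have "(\<Sum>k\<in>K. x k) = x k0 + (\<Sum>k\<in>K - {k0}. x k)" by (rule sum.remove[OF Kf k0K])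
    also have "\<dots> = 1" using x0 rest by simp
    finally show ?thesis using Mapp_sum unfolding K_def by simp
  qed
  thus ?thesis unfolding Sabc_def using xB by auto
qed

lemma S_iff: "t \<in> Sabc a b c \<longleftrightarrow> good a b c t"
  using S_good good_S by blast

end

theorem theorem4p1:
  fixes a b c :: real
  assumes "0 < a" "a < b" "b < c" "b - a < c0 b c" "c0 b c < a"
  shows "(R a b c ` Sabc a b c \<subseteq> Sabc a b c \<and> Rt a b c ` Sabc a b c \<subseteq> Sabc a b c
           \<and> Sabc a b c \<inter> (H a b c \<union> Ht a b c) = {}
           \<and> (\<forall>E::real set. R a b c ` E \<subseteq> E \<and> Rt a b c ` E \<subseteq> E
                 \<and> E \<inter> (H a b c \<union> Ht a b c) = {} \<longrightarrow> E \<subseteq> Sabc a b c))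
       \<and> (R a b c ` (- Sabc a b c) \<subseteq> - Sabc a b c \<and> Rt a b c ` (- Sabc a b c) \<subseteq> - Sabc a b c
           \<and> H a b c \<union> Ht a b c \<subseteq> - Sabc a b c
           \<and> (\<forall>F::real set. R a b c ` F \<subseteq> F \<and> Rt a b c ` F \<subseteq> F
                 \<and> H a b c \<union> Ht a b c \<subseteq> F \<longrightarrow> - Sabc a b c \<subseteq> F))"
proof -
  note S = S_iff[OF assms]
  have g0: "good a b c t \<Longrightarrow> t \<notin> H a b c \<and> t \<notin> Ht a b c" for t
    unfolding good_def by (metis funpow_0)
  have i1: "R a b c ` Sabc a b c \<subseteq> Sabc a b c" by (simp add: image_subset_iff S good_R[OF assms])
  have i2: "Rt a b c ` Sabc a b c \<subseteq> Sabc a b c" by (simp add: image_subset_iff S good_Rt[OF assms])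
  have i3: "Sabc a b c \<inter> (H a b c \<union> Ht a b c) = {}" using g0 by (auto simp add: S)
  have i4: "\<forall>E::real set. R a b c ` E \<subseteq> E \<and> Rt a b c ` E \<subseteq> E
                 \<and> E \<inter> (H a b c \<union> Ht a b c) = {} \<longrightarrow> E \<subseteq> Sabc a b c"
    using E_good[OF assms] by (auto simp add: S)
  have j1: "R a b c ` (- Sabc a b c) \<subseteq> - Sabc a b c" using good_R_back[OF assms] by (auto simp add: image_subset_iff S)
  have j2: "Rt a b c ` (- Sabc a b c) \<subseteq> - Sabc a b c" using good_Rt_back[OF assms] by (auto simp add: image_subset_iff S)
  have j3: "H a b c \<union> Ht a b c \<subseteq> - Sabc a b c" using g0 by (auto simp add: S)
  have j4: "\<forall>F::real set. R a b c ` F \<subseteq> F \<and> Rt a b c ` F \<subseteq> F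
                 \<and> H a b c \<union> Ht a b c \<subseteq> F \<longrightarrow> - Sabc a b c \<subseteq> F"
    using min_F[OF assms] by (auto simp add: S)
  show ?thesis using i1 i2 i3 i4 j1 j2 j3 j4 by (intro conjI)
qed

end
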